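(* Let $N\ge 1$ be an integer and let $P_N$ be the polynomial defined in the context. Then for every $t\in(0,\pi)$ with $t\neq \frac{2\pi}{N+2}$, $$ P_N(e^{it})=\frac{1}{2\bigl(\cos t-\cos\frac{2\pi}{N+2}\bigr)}+\frac{1-\cos\frac{2\pi}{N+2}}{(N+2)(1-\cos t)}\cdot\frac{\sin t\,\sin\frac{(N+2)t}{2}}{\bigl(\cos t-\cos\frac{2\pi}{N+2}\bigr)^2}\,e^{\frac{(N+2)}{2}it}. $$
   Context: For an integer $N\ge1$ put $b_0=1$ and, for $k=1,\dots,N$, $$b_k=\frac{(N-k+3)\sin\frac{(k+1)\pi}{N+2}-(N-k+1)\sin\frac{(k-1)\pi}{N+2}}{(N+2)\sin\frac{\pi}{N+2}}$$ (these are the cosine coefficients of the Egerváry–Szász polynomial $\frac{2}{N+2}\bigl|\sum_{k=0}^N\sin\frac{\pi(k+1)}{N+2}e^{ikt}\bigr|^2=\sum_{k=0}^N b_k\cos kt$). Define the polynomial $$P_N(z)=\frac{1}{\sin\frac{2\pi}{N+2}}\sum_{k=1}^N b_k\sin\frac{k\pi}{N+2}\,z^k,$$ which satisfies $P_N(0)=0$, $P_N'(0)=1$ (e.g. $P_1(z)=z$, $P_2(z)=z+\tfrac12z^2$, $P_3(z)=z+\tfrac{2}{\sqrt5}z^2+\tfrac12(1-\tfrac1{\sqrt5})z^3$, $P_4(z)=z+\tfrac76z^2+\tfrac23z^3+\tfrac16z^4$). *)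

theory Defs
  imports "HOL-Analysis.Analysis"
begin

text \<open>Cosine coefficients of the Egervary-Szasz polynomial (b_0 = 1).\<close>
definition es_coeff :: "nat \<Rightarrow> nat \<Rightarrow> real" where
  "es_coeff N k = (if k = 0 then 1 else
     ((real N - real k + 3) * sin ((real k + 1) * pi / (real N + 2))
      - (real N - real k + 1) * sin ((real k - 1) * pi / (real N + 2)))
     / ((real N + 2) * sin (pi / (real N + 2))))"

definition P_poly :: "nat \<Rightarrow> complex \<Rightarrow> complex" where
  "P_poly N z = (1 / complex_of_real (sin (2 * pi / (real N + 2)))) *
     (\<Sum>k = 1..N. complex_of_real (es_coeff N k * sin (real k * pi / (real N + 2))) * z ^ k)"

end

theory Submission imports Defs begin

lemma inv_cis': "1 / cis x = cis (-x)"
  by (metis cis_inverse inverse_eq_divide)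

lemma sin_cis: "complex_of_real (sin x) = (cis x - 1 / cis x) / (2*\<i>)"
proof -
  have "cis x - cis (-x) = 2*\<i>*complex_of_real (sin x)" by (simp add: complex_eq_iff)
  then show ?thesis unfolding inv_cis' by simp
qed

lemma cos_cis: "complex_of_real (cos x) = (cis x + 1 / cis x) / 2"
  unfolding inv_cis' by (simp add: complex_eq_iff field_simps)

lemma sin_cis_mult: "complex_of_real (sin x) * cis x = (cis (2*x) - 1) / (2*\<i>)"
proof -
  have "cis x * cis x = cis (2*x)" by (simp add: cis_mult)
  then show ?thesis unfolding sin_cis by (simp add: field_simps)
qed

lemma geo0:
  fixes x :: complex assumes "x \<noteq> 1"
  shows "(\<Sum>k=1..n. x^k) = x*(1 - x^n)/(1-x)"
proof (induction n)
  case 0 then show ?case by simp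
next
  case (Suc n)
  have d: "1 - x \<noteq> 0" using assms by simp
  have "(\<Sum>k=1..Suc n. x^k) = (\<Sum>k=1..n. x^k) + x^Suc n" by simp
  also have "\<dots> = x*(1 - x^n)/(1-x) + x^Suc n" using Suc by simp
  also have "\<dots> = x*(1 - x^Suc n)/(1-x)" using d by (simp add: field_simps)
  finally show ?case .
qed

lemma geo1:
  fixes x :: complex assumes "x \<noteq> 1"
  shows "(\<Sum>k=1..n. of_nat k * x^k) = x*(1 - (of_nat n + 1)*x^n + of_nat n * x^(n+1))/(1-x)^2"
proof (induction n)
  case 0 then show ?case by simp
next
  case (Suc n)
  have d: "1 - x \<noteq> 0" using assms by simp
  have "(\<Sum>k=1..Suc n. of_nat k * x^k) = (\<Sum>k=1..n. of_nat k * x^k) + of_nat (Suc n) * x^Suc n" by simp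
  also have "\<dots> = x*(1 - (of_nat n + 1)*x^n + of_nat n * x^(n+1))/(1-x)^2 + of_nat (Suc n) * x^Suc n" using Suc by simp
  also have "\<dots> = x*(1 - (of_nat (Suc n) + 1)*x^(Suc n) + of_nat (Suc n) * x^(Suc n+1))/(1-x)^2"
    using d by (simp add: field_simps) algebra
  finally show ?case .
qed

lemma term_alg0:
  fixes u w k m a1 a2 s :: complex
  assumes "u \<noteq> 0" "w \<noteq> 0" "a1 \<noteq> 0" "a2 \<noteq> 0" "s \<noteq> 0" "m \<noteq> 0"
    and h1: "a1 = w - 1" and h2: "a2 = w + 1" and h3: "s = w^2 + 1"
  shows "1/((a1*a2 * s/w^2)/(2*\<i>)) * ( ((m-k+1)*((u*w-1/(u*w))/(2*\<i>)) - (m-k-1)*((u/w - w/u)/(2*\<i>))) / (m*((a1*a2/w)/(2*\<i>))) * ((u-1/u)/(2*\<i>)) )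
    = -2*w^2/((a1*a2) * s * m) * ( s/(a1*a2) + ((m-1)-(m+1)*w^2)/(2*(a1*a2)) * u^2 + k/2 * u^2
        + ((m-1)*w^2-(m+1))/(2*(a1*a2)) / u^2 - k/2 / u^2)"
  using assms(1-6)
  apply (simp add: field_simps)
  apply (unfold h1 h2 h3)
  apply (thin_tac _)+
  by algebra

lemma term_concrete:
  fixes N k :: nat
  assumes k: "k \<ge> 1" and N: "N \<ge> 1"
  defines "M \<equiv> real N + 2"
  defines "w \<equiv> cis (pi / M)" and "u \<equiv> cis (real k * (pi / M))" and "m \<equiv> complex_of_real M"
  shows "complex_of_real (1 / sin (2 * pi / M)) * complex_of_real (es_coeff N k * sin (real k * pi / M))
    = -2*w^2/(((w-1)*(w+1)) * (w^2+1) * m) * ( (w^2+1)/((w-1)*(w+1)) + ((m-1)-(m+1)*w^2)/(2*((w-1)*(w+1))) * u^2 + of_nat k/2 * u^2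
        + ((m-1)*w^2-(m+1))/(2*((w-1)*(w+1))) / u^2 - of_nat k/2 / u^2)"
proof -
  have M3: "M \<ge> 3" using N unfolding M_def by simp
  have Mpos: "M > 0" using M3 by simp
  have th0: "0 < pi / M" using Mpos by simp
  have th1: "pi / M \<le> pi / 3" using M3 by (intro divide_left_mono) auto
  have lt1: "pi/M < pi" using th1 pi_gt_zero by linarith
  have e2pi: "2*pi/M = 2*(pi/M)" by simp
  have lt2: "2*pi/M < pi" unfolding e2pi using th1 pi_gt_zero by linarith
  have sin1: "sin (pi / M) > 0" using th0 lt1 by (intro sin_gt_zero) auto
  have sin2: "sin (2 * pi / M) > 0" using th0 lt2 by (intro sin_gt_zero) auto
  have u0: "u \<noteq> 0" and w0: "w \<noteq> 0" unfolding u_def w_def by auto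
  have w2: "w^2 = cis (2 * pi / M)"
  proof -
    have "w^2 = cis (pi/M + pi/M)" unfolding w_def power2_eq_square cis_mult ..
    also have "pi/M + pi/M = 2 * pi / M" by simp
    finally show ?thesis .
  qed
  have S2: "complex_of_real (sin (2 * pi / M)) = ((w-1)*(w+1) * (w^2+1)/w^2)/(2*\<i>)"
    unfolding sin_cis w2[symmetric] using w0 by (simp add: field_simps power2_eq_square)
  have S1: "complex_of_real (sin (pi / M)) = ((w-1)*(w+1)/w)/(2*\<i>)"
    unfolding sin_cis w_def[symmetric] using w0 by (simp add: field_simps power2_eq_square)
  have a1: "w - 1 \<noteq> 0" and a2: "w + 1 \<noteq> 0" and s: "w^2 + 1 \<noteq> 0"
    using S1 S2 sin1 sin2 w0 by auto
  have m0: "m \<noteq> 0" unfolding m_def using Mpos by simp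
  have e1: "(real k + 1) * pi / (real N + 2) = real k * (pi / M) + pi / M" unfolding M_def by (simp add: distrib_right add_divide_distrib)
  have e2: "(real k - 1) * pi / (real N + 2) = real k * (pi / M) - pi / M" unfolding M_def by (simp add: left_diff_distrib diff_divide_distrib)
  have e3: "pi / (real N + 2) = pi / M" unfolding M_def by simp
  have e4: "real k * pi / M = real k * (pi / M)" by simp
  have Sa: "complex_of_real (sin ((real k + 1) * pi / (real N + 2))) = (u*w - 1/(u*w))/(2*\<i>)"
    unfolding e1 sin_cis u_def w_def cis_mult by simp
  have Sb: "complex_of_real (sin ((real k - 1) * pi / (real N + 2))) = (u/w - w/u)/(2*\<i>)"
    unfolding e2 sin_cis u_def w_def cis_divide by (simp add: inv_cis')
  have Sc: "complex_of_real (sin (real k * pi / M)) = (u - 1/u)/(2*\<i>)"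
    unfolding e4 sin_cis u_def by simp
  have Sd: "complex_of_real (sin (pi / (real N + 2))) = ((w-1)*(w+1)/w)/(2*\<i>)"
    unfolding e3 by (rule S1)
  have kne: "(k = 0) = False" using k by simp
  have cA: "complex_of_real (real N - real k + 3) = m - of_nat k + 1" unfolding m_def M_def by simp
  have cB: "complex_of_real (real N - real k + 1) = m - of_nat k - 1" unfolding m_def M_def by simp
  have cM: "complex_of_real (real N + 2) = m" unfolding m_def M_def by simp
  have "complex_of_real (1 / sin (2 * pi / M)) * complex_of_real (es_coeff N k * sin (real k * pi / M))
     = 1/((((w-1)*(w+1)) * (w^2+1)/w^2)/(2*\<i>)) * ( ((m-of_nat k+1)*((u*w-1/(u*w))/(2*\<i>)) - (m-of_nat k-1)*((u/w - w/u)/(2*\<i>))) / (m*((((w-1)*(w+1))/w)/(2*\<i>))) * ((u-1/u)/(2*\<i>)) )"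
    unfolding es_coeff_def
    apply (simp only: kne if_False)
    apply (simp only: of_real_mult of_real_divide of_real_diff)
    by (simp only: Sa Sb Sc Sd cA cB cM S2 of_real_1)
  also have "\<dots> = -2*w^2/(((w-1)*(w+1)) * (w^2+1) * m) * ( (w^2+1)/((w-1)*(w+1)) + ((m-1)-(m+1)*w^2)/(2*((w-1)*(w+1))) * u^2 + of_nat k/2 * u^2
        + ((m-1)*w^2-(m+1))/(2*((w-1)*(w+1))) / u^2 - of_nat k/2 / u^2)"
    by (rule term_alg0[OF u0 w0 a1 a2 s m0 refl refl refl])
  finally show ?thesis .
qed
lemma key:
  fixes q z Z m a b c r s :: complex
  assumes "a \<noteq> 0" "b \<noteq> 0" "c \<noteq> 0" "r \<noteq> 0" "s \<noteq> 0" "q \<noteq> 0" "z \<noteq> 0" "m \<noteq> 0"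
   and ha: "a = 1 - z" and hb: "b = 1 - q*z" and hc: "c = q - z" and hr: "r = q - 1" and hs: "s = q + 1"
  shows "-2*q/(r * s * m) * (s/r * (z*(1-Z)/a) + ((m-1)-(m+1)*q)/(2*r) * ((q*z)*(1-Z/q^2)/b)
      + 1/2*((q*z)*(1-(m-1)*(Z/q^2)+(m-2)*((Z/q^2)*(q*z)))/b^2)
      + ((m-1)*q-(m+1))/(2*r) * ((z/q)*(1-Z*q^2)/(c/q))
      - 1/2*((z/q)*(1-(m-1)*(Z*q^2)+(m-2)*((Z*q^2)*(z/q)))/(c/q)^2))
   = 1/(2*(b*c/(2*z*q))) + (1 - (q+1/q)/2)/(m*(-(a*a)/(2*z))) * ((z-1/z)/(2*\<i>)) * ((Z*z^2-1)/(2*\<i>)) / (b*c/(2*z*q))^2"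
  using assms(1-8)
  apply (simp add: field_simps)
  apply (unfold ha hb hc hr hs)
  apply (thin_tac _)+
  by algebra

lemma sum5:
  fixes K A B E :: complex
  shows "(\<Sum>k\<in>S. K*(A*f k + B*g k + 1/2*h k + E*p k - 1/2*r k)) = K*(A* sum f S + B* sum g S + 1/2* sum h S + E* sum p S - 1/2* sum r S)"
  by (simp only: sum_distrib_left[symmetric] sum.distrib sum_subtractf)

theorem theorem1:
  fixes N :: nat and t :: real
  assumes "N \<ge> 1" and "0 < t" and "t < pi" and "t \<noteq> 2 * pi / (real N + 2)"
  shows "P_poly N (cis t) =
    complex_of_real (1 / (2 * (cos t - cos (2 * pi / (real N + 2)))))
    + complex_of_real ((1 - cos (2 * pi / (real N + 2))) / ((real N + 2) * (1 - cos t))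
        * (sin t * sin ((real N + 2) * t / 2)) / (cos t - cos (2 * pi / (real N + 2)))^2)
      * cis ((real N + 2) / 2 * t)"
proof -
  define M where "M = real N + 2"
  define w where "w = cis (pi / M)"
  define m where "m = complex_of_real M"
  define z where "z = cis t"
  define Z where "Z = z ^ N"
  define q where "q = w^2"
  define K where "K = -2*w^2/(((w-1)*(w+1)) * (w^2+1) * m)"
  define A where "A = (w^2+1)/((w-1)*(w+1))"
  define B where "B = ((m-1)-(m+1)*w^2)/(2*((w-1)*(w+1)))"
  define E where "E = ((m-1)*w^2-(m+1))/(2*((w-1)*(w+1)))"
  have M3: "M \<ge> 3" using assms(1) unfolding M_def by simp
  have Mpos: "M > 0" using M3 by simp
  have th0: "0 < pi / M" using Mpos by simp
  have th1: "pi / M \<le> pi / 3" using M3 by (intro divide_left_mono) auto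
  have lt1: "pi/M < pi" using th1 pi_gt_zero by linarith
  have e2pi: "2*pi/M = 2*(pi/M)" by simp
  have lt2: "2*pi/M < pi" unfolding e2pi using th1 pi_gt_zero by linarith
  have sin1: "sin (pi / M) > 0" using th0 lt1 by (intro sin_gt_zero) auto
  have sin2: "sin (2 * pi / M) > 0" using th0 lt2 by (intro sin_gt_zero) auto
  have w0: "w \<noteq> 0" unfolding w_def by auto
  have w2: "w^2 = cis (2 * pi / M)"
  proof -
    have "w^2 = cis (pi/M + pi/M)" unfolding w_def power2_eq_square cis_mult ..
    also have "pi/M + pi/M = 2 * pi / M" by simp
    finally show ?thesis .
  qed
  have S2: "complex_of_real (sin (2 * pi / M)) = ((w-1)*(w+1) * (w^2+1)/w^2)/(2*\<i>)"
    unfolding sin_cis w2[symmetric] using w0 by (simp add: field_simps power2_eq_square)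
  have S1: "complex_of_real (sin (pi / M)) = ((w-1)*(w+1)/w)/(2*\<i>)"
    unfolding sin_cis w_def[symmetric] using w0 by (simp add: field_simps power2_eq_square)
  have a1: "w - 1 \<noteq> 0" and a2: "w + 1 \<noteq> 0" and s0: "w^2 + 1 \<noteq> 0"
    using S1 S2 sin1 sin2 w0 by auto
  have m0: "m \<noteq> 0" unfolding m_def using Mpos by simp
  have q0: "q \<noteq> 0" unfolding q_def using w0 by simp
  have z0: "z \<noteq> 0" unfolding z_def by simp
  have sint: "sin t > 0" using assms by (intro sin_gt_zero) auto
  have za: "1 - z \<noteq> 0"
  proof
    assume "1 - z = 0"
    then have "z = 1" by simp
    then have "Im z = 0" by simp
    with sint show False unfolding z_def by simp
  qed
  have cosne: "cos t \<noteq> cos (2 * pi / M)"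
  proof
    assume "cos t = cos (2 * pi / M)"
    moreover have "0 \<le> 2 * pi / M" using th0 unfolding e2pi by linarith
    ultimately have "t = 2 * pi / M"
      using cos_inj_pi[of t "2 * pi / M"] assms(2,3) lt2 by linarith
    with assms(4) show False unfolding M_def by blast
  qed
  have Cz: "complex_of_real (cos t) = (z + 1/z)/2" unfolding cos_cis z_def ..
  have Sz: "complex_of_real (sin t) = (z - 1/z)/(2*\<i>)" unfolding sin_cis z_def ..
  have Cq: "complex_of_real (cos (2 * pi / M)) = (q + 1/q)/2" unfolding cos_cis q_def w2 ..
  have bc: "(z + 1/z)/2 - (q + 1/q)/2 = (1 - q*z)*(q - z)/(2*z*q)"
    using z0 q0 by (simp add: field_simps)
  have Dne: "(z + 1/z)/2 - (q + 1/q)/2 \<noteq> 0"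
    using cosne unfolding Cz[symmetric] Cq[symmetric] by (metis eq_iff_diff_eq_0 of_real_diff of_real_eq_0_iff)
  have b0: "1 - q*z \<noteq> 0" and c0: "q - z \<noteq> 0" using Dne unfolding bc by auto
  have ac: "1 - (z + 1/z)/2 = (-((1-z)*(1-z)))/(2*z)" using z0 by (simp add: field_simps)
  have qN: "q^N = 1/q^2"
  proof -
    have "q^(N+2) = cis (real (N+2) * (2 * pi / M))" unfolding q_def w2 by (rule Complex.DeMoivre)
    also have "real (N+2) * (2 * pi / M) = 2 * pi" unfolding M_def using Mpos M_def by (simp add: field_simps)
    finally have "q^(N+2) = 1" by (simp only: cis_2pi)
    then have "q^N * q^2 = 1" by (simp only: power_add)
    then show ?thesis using q0 by (simp add: field_simps)
  qed
  have qzN: "(q*z)^N = Z/q^2" unfolding Z_def power_mult_distrib qN by simp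
  have zqN: "(z/q)^N = Z*q^2" unfolding Z_def power_divide qN by simp
  have qz1: "q*z \<noteq> 1" using b0 by simp
  have zq1: "z/q \<noteq> 1" using c0 q0 by (simp add: field_simps)
  have z1: "z \<noteq> 1" using za by simp
  have mN: "of_nat N = m - 2" unfolding m_def M_def by simp
  have mN1: "of_nat N + 1 = m - 1" unfolding m_def M_def by simp
  have zq: "1 - z/q = (q - z)/q" using q0 by (simp add: field_simps)
  have r0: "(w-1)*(w+1) \<noteq> 0" using a1 a2 by simp
  have s0': "q + 1 \<noteq> 0" using s0 unfolding q_def .
  have hr: "(w-1)*(w+1) = q - 1" unfolding q_def by (simp add: algebra_simps power2_eq_square)
  have "P_poly N z = (\<Sum>k=1..N. complex_of_real (1 / sin (2 * pi / M)) * complex_of_real (es_coeff N k * sin (real k * pi / M)) * z^k)"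
    unfolding P_poly_def M_def by (simp add: sum_distrib_left mult.assoc)
  also have "\<dots> = (\<Sum>k=1..N. K*(A*z^k + B*(q*z)^k + 1/2*(of_nat k*(q*z)^k) + E*(z/q)^k - 1/2*(of_nat k*(z/q)^k)))"
  proof (rule sum.cong[OF refl])
    fix k assume "k \<in> {1..N}"
    then have k: "k \<ge> 1" by simp
    have u: "cis (real k * (pi / M)) = w^k" unfolding w_def Complex.DeMoivre ..
    have qk: "q^k \<noteq> 0" using q0 by simp
    have u2: "(w^k)^2 = q^k" unfolding q_def by (simp add: power_mult[symmetric] mult.commute)
    have hX: "complex_of_real (1 / sin (2 * pi / M)) * complex_of_real (es_coeff N k * sin (real k * pi / M)) =
       K * (A + B*q^k + of_nat k/2*q^k + E/q^k - of_nat k/2/q^k)"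
      using term_concrete[OF k assms(1)] unfolding M_def[symmetric] w_def[symmetric] m_def[symmetric] u u2
      unfolding K_def A_def B_def E_def by simp
    show "complex_of_real (1 / sin (2 * pi / M)) * complex_of_real (es_coeff N k * sin (real k * pi / M)) * z^k
      = K*(A*z^k + B*(q*z)^k + 1/2*(of_nat k*(q*z)^k) + E*(z/q)^k - 1/2*(of_nat k*(z/q)^k))"
      unfolding hX power_mult_distrib power_divide using qk by (simp add: field_simps)
  qed
  also have "\<dots> = K*(A*(\<Sum>k=1..N. z^k) + B*(\<Sum>k=1..N. (q*z)^k) + 1/2*(\<Sum>k=1..N. of_nat k*(q*z)^k)
       + E*(\<Sum>k=1..N. (z/q)^k) - 1/2*(\<Sum>k=1..N. of_nat k*(z/q)^k))"
    by (rule sum5)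
  also have "\<dots> = K*(A*(z*(1-Z)/(1-z)) + B*((q*z)*(1-Z/q^2)/(1-q*z))
      + 1/2*((q*z)*(1-(m-1)*(Z/q^2)+(m-2)*((Z/q^2)*(q*z)))/(1-q*z)^2)
      + E*((z/q)*(1-Z*q^2)/((q-z)/q))
      - 1/2*((z/q)*(1-(m-1)*(Z*q^2)+(m-2)*((Z*q^2)*(z/q)))/((q-z)/q)^2))"
    unfolding geo0[OF z1] geo0[OF qz1] geo0[OF zq1] geo1[OF qz1] geo1[OF zq1]
    unfolding mN1 unfolding qzN zqN mN power_Suc2 Suc_eq_plus1[symmetric] zq Z_def ..
  also have "\<dots> = 1/(2*((1 - q*z)*(q - z)/(2*z*q))) + (1 - (q+1/q)/2)/(m*((-((1-z)*(1-z)))/(2*z))) * ((z-1/z)/(2*\<i>)) * ((Z*z^2-1)/(2*\<i>)) / ((1 - q*z)*(q - z)/(2*z*q))^2"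
    unfolding K_def A_def B_def E_def q_def[symmetric]
    by (rule key[OF za b0 c0 r0 s0' q0 z0 m0 refl refl refl hr refl])
  also have "\<dots> = complex_of_real (1 / (2 * (cos t - cos (2 * pi / (real N + 2)))))
    + complex_of_real ((1 - cos (2 * pi / (real N + 2))) / ((real N + 2) * (1 - cos t))
        * (sin t * sin ((real N + 2) * t / 2)) / (cos t - cos (2 * pi / (real N + 2)))^2)
      * cis ((real N + 2) / 2 * t)"
  proof -
    have e: "(real N + 2) * t / 2 = (real N + 2) / 2 * t" by simp
    have ZZ: "complex_of_real (sin ((real N + 2) / 2 * t)) * cis ((real N + 2) / 2 * t) = (Z*z^2-1)/(2*\<i>)"
    proof -
      have "cis (2 * ((real N + 2) / 2 * t)) = cis (real (N+2) * t)" by (simp add: add.commute)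
      also have "\<dots> = Z*z^2" unfolding Z_def z_def Complex.DeMoivre[symmetric] by (simp add: power_add power2_eq_square)
      finally show ?thesis by (simp add: sin_cis_mult)
    qed
    have ZZ': "complex_of_real (sin (M * t / 2)) * cis (M / 2 * t) = (Z*z^2-1)/(2*\<i>)"
      using ZZ unfolding M_def by (simp add: mult.commute)
    have re: "\<And>x s sn d W :: complex. x * (s * sn) / d * W = x * s * (sn * W) / d"
      by (simp add: divide_inverse mult_ac)
    show ?thesis
      unfolding e M_def[symmetric] of_real_add of_real_mult of_real_divide of_real_diff of_real_power of_real_1
        of_real_numeral re
      unfolding Cz Cq Sz bc[symmetric] ac[symmetric] m_def[symmetric]
      using ZZ' by (simp only: mult.assoc)
  qed
  finally show ?thesis unfolding z_def .
qed

end
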